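(* Let $\mathfrak a_{1.3}$ be the Lie algebra of vector fields on $\mathbb R^3_{z_1,z_2,w}$ spanned by \[ P^1=\partial_{z_1},\ D^1=z_1\partial_{z_1}-w\partial_w,\ K=z_1^2\partial_{z_1}+z_1z_2\partial_{z_2}+\big(z_1w+\tfrac16z_2^{3}\big)\partial_w,\ D^2=z_2\partial_{z_2}+3w\partial_w, \] \[ P^2=\partial_{z_2},\ H=z_1\partial_{z_2}+\tfrac12z_2^{2}\partial_w,\ R(\alpha)=\alpha(z_1)z_2\partial_w,\ Z(\sigma)=\sigma(z_1)\partial_w \] ($\alpha,\sigma$ arbitrary smooth functions of $z_1$). Then any one-dimensional subalgebra of $\mathfrak a_{1.3}$ that is appropriate for Lie reduction of the equation $w_{122}+w_{22}w_{222}=0$ is $G_{1.3}$-equivalent to a subalgebra contained in the span $\mathfrak u:=\langle P^1,D^1,K,D^2,P^2,H\rangle$ or in the span $\langle P^2,R(\alpha)\rangle$ for some smooth function $\alpha$ of $z_1$.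
   Context: A one-dimensional subalgebra $\langle Q\rangle$ is appropriate for Lie reduction if the projection of $Q$ to the space of independent variables $(z_1,z_2)$ is not identically zero. $G_{1.3}$ is the point-symmetry pseudogroup of $w_{122}+w_{22}w_{222}=0$, consisting of the transformations $\tilde z_1=\frac{c_1z_1+c_2}{c_3z_1+c_4}$, $\tilde z_2=\frac{z_2+c_5z_1+c_6}{c_3z_1+c_4}$, $\tilde w=\frac{w}{\Delta(c_3z_1+c_4)}-\frac{c_3}{\Delta(c_3z_1+c_4)^2}\frac{z_2^3}6-\frac{c_3c_6-c_4c_5}{\Delta(c_3z_1+c_4)^2}\frac{z_2^2}2+W^1(z_1)z_2+W^0(z_1)$, with constants $c_i$, $\Delta:=c_1c_4-c_2c_3\ne0$, and smooth functions $W^0,W^1$. Two subalgebras are $G_{1.3}$-equivalent if one is the pushforward of the other by an element of $G_{1.3}$. *)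

theory Defs
  imports "HOL-Analysis.Analysis"
begin

text \<open>Points of R^3 with coordinates (z1, z2, w); vector fields are maps R^3 -> R^3
  giving the components (coefficient of d/dz1, of d/dz2, of d/dw).\<close>

type_synonym pt = "real \<times> real \<times> real"
type_synonym vfield = "pt \<Rightarrow> pt"

definition smooth_on :: "real set \<Rightarrow> (real \<Rightarrow> real) \<Rightarrow> bool" where
  "smooth_on S f \<longleftrightarrow> (\<forall>n. \<forall>x\<in>S. ((deriv ^^ n) f) field_differentiable (at x))"

definition vP1 :: vfield where "vP1 = (\<lambda>(z1,z2,w). (1, 0, 0))"
definition vD1 :: vfield where "vD1 = (\<lambda>(z1,z2,w). (z1, 0, - w))"
definition vK :: vfield where
  "vK = (\<lambda>(z1,z2,w). (z1^2, z1 * z2, z1 * w + z2^3 / 6))"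
definition vD2 :: vfield where "vD2 = (\<lambda>(z1,z2,w). (0, z2, 3 * w))"
definition vP2 :: vfield where "vP2 = (\<lambda>(z1,z2,w). (0, 1, 0))"
definition vH :: vfield where "vH = (\<lambda>(z1,z2,w). (0, z1, z2^2 / 2))"
definition vR :: "(real \<Rightarrow> real) \<Rightarrow> vfield" where
  "vR \<alpha> = (\<lambda>(z1,z2,w). (0, 0, \<alpha> z1 * z2))"
definition vZ :: "(real \<Rightarrow> real) \<Rightarrow> vfield" where
  "vZ \<sigma> = (\<lambda>(z1,z2,w). (0, 0, \<sigma> z1))"

definition u_comb :: "real \<Rightarrow> real \<Rightarrow> real \<Rightarrow> real \<Rightarrow> real \<Rightarrow> real \<Rightarrow> vfield" where
  "u_comb a1 b1 k b2 a2 h = (\<lambda>x. a1 *\<^sub>R vP1 x + b1 *\<^sub>R vD1 x + k *\<^sub>R vK x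
      + b2 *\<^sub>R vD2 x + a2 *\<^sub>R vP2 x + h *\<^sub>R vH x)"

text \<open>Membership in the span a_{1.3} (finite linear combinations; sums of R(alpha_i),
  resp. Z(sigma_i), are again of the form R(alpha), resp. Z(sigma)).\<close>
definition in_a13 :: "vfield \<Rightarrow> bool" where
  "in_a13 Q \<longleftrightarrow> (\<exists>a1 b1 k b2 a2 h \<alpha> \<sigma>. smooth_on UNIV \<alpha> \<and> smooth_on UNIV \<sigma> \<and>
      Q = (\<lambda>x. u_comb a1 b1 k b2 a2 h x + vR \<alpha> x + vZ \<sigma> x))"

definition appropriate :: "vfield \<Rightarrow> bool" where
  "appropriate Q \<longleftrightarrow> (\<exists>x. fst (Q x) \<noteq> 0 \<or> fst (snd (Q x)) \<noteq> 0)"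

definition g13 :: "real \<Rightarrow> real \<Rightarrow> real \<Rightarrow> real \<Rightarrow> real \<Rightarrow> real \<Rightarrow>
    (real \<Rightarrow> real) \<Rightarrow> (real \<Rightarrow> real) \<Rightarrow> pt \<Rightarrow> pt" where
  "g13 c1 c2 c3 c4 c5 c6 W0 W1 = (\<lambda>(z1,z2,w).
     (let \<Delta> = c1 * c4 - c2 * c3; d = c3 * z1 + c4 in
      ((c1 * z1 + c2) / d,
       (z2 + c5 * z1 + c6) / d,
       w / (\<Delta> * d) - c3 / (\<Delta> * d^2) * (z2^3 / 6)
         - (c3 * c6 - c4 * c5) / (\<Delta> * d^2) * (z2^2 / 2) + W1 z1 * z2 + W0 z1)))"

definition pushes :: "(pt \<Rightarrow> pt) \<Rightarrow> pt set \<Rightarrow> vfield \<Rightarrow> vfield \<Rightarrow> bool" where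
  "pushes \<Phi> U Q Q' \<longleftrightarrow>
     (\<forall>x\<in>U. \<exists>D. (\<Phi> has_derivative D) (at x) \<and> D (Q x) = Q' (\<Phi> x))"

end

theory Submission
  imports Defs
begin

definition Cn :: "nat \<Rightarrow> real set \<Rightarrow> (real \<Rightarrow> real) \<Rightarrow> bool" where
  "Cn n S f \<longleftrightarrow> (\<forall>m\<le>n. \<forall>x\<in>S. ((deriv ^^ m) f) field_differentiable (at x))"

lemma smooth_Cn: "smooth_on S f \<longleftrightarrow> (\<forall>n. Cn n S f)"
  unfolding smooth_on_def Cn_def by auto

lemma Cn_0: "Cn 0 S f \<longleftrightarrow> (\<forall>x\<in>S. f field_differentiable (at x))"
  unfolding Cn_def by auto

lemma Cn_Suc: "Cn (Suc n) S f \<longleftrightarrow> (\<forall>x\<in>S. f field_differentiable (at x)) \<and> Cn n S (deriv f)"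
proof -
  have e: "(deriv ^^ Suc m) f = (deriv ^^ m) (deriv f)" for m
    by (simp only: funpow_Suc_right comp_def)
  show ?thesis
    unfolding Cn_def
  proof safe
    fix m x assume h: "\<forall>m\<le>Suc n. \<forall>x\<in>S. (deriv ^^ m) f field_differentiable at x" "m \<le> n" "x \<in> S"
    then show "(deriv ^^ m) (deriv f) field_differentiable at x"
      using h(1)[rule_format, of "Suc m" x] by (simp only: e)
  next
    fix x assume h: "\<forall>m\<le>Suc n. \<forall>x\<in>S. (deriv ^^ m) f field_differentiable at x" "x \<in> S"
    show "f field_differentiable at x" using h(1)[rule_format, of 0 x] h(2) by simp
  next
    fix m x assume h: "\<forall>x\<in>S. f field_differentiable at x"
      "\<forall>m\<le>n. \<forall>x\<in>S. (deriv ^^ m) (deriv f) field_differentiable at x" "m \<le> Suc n" "x \<in> S"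
    show "(deriv ^^ m) f field_differentiable at x"
    proof (cases m)
      case 0 then show ?thesis using h by simp
    next
      case (Suc k)
      have "(deriv ^^ k) (deriv f) field_differentiable at x" using h Suc by auto
      then show ?thesis by (simp only: Suc e)
    qed
  qed
qed

lemma Cn_diff: "Cn n S f \<Longrightarrow> x \<in> S \<Longrightarrow> f field_differentiable (at x)"
proof -
  assume "Cn n S f" "x \<in> S"
  then have "(deriv ^^ 0) f field_differentiable (at x)" unfolding Cn_def by blast
  then show ?thesis by simp
qed

lemma Cn_mono: "Cn n S f \<Longrightarrow> m \<le> n \<Longrightarrow> Cn m S f"
  unfolding Cn_def using le_trans by blast

lemma Cn_subset: "Cn n S f \<Longrightarrow> T \<subseteq> S \<Longrightarrow> Cn n T f"
  unfolding Cn_def by blast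

lemma higher_deriv_local:
  assumes "open S" "\<And>x. x \<in> S \<Longrightarrow> f x = g x" "x \<in> S"
  shows "(deriv ^^ m) f x = (deriv ^^ m) g x"
proof -
  have "eventually (\<lambda>y. f y = g y) (nhds x)"
    using eventually_nhds_in_open[OF assms(1,3)] by (rule eventually_mono) (rule assms(2))
  then show ?thesis by (rule higher_deriv_cong_ev) simp
qed

lemma Cn_cong:
  assumes "open S" "\<And>x. x \<in> S \<Longrightarrow> f x = g x" "Cn n S f"
  shows "Cn n S g"
  unfolding Cn_def
proof safe
  fix m x assume "m \<le> n" "x \<in> S"
  then have "(deriv ^^ m) f field_differentiable at x" using assms(3) Cn_def by auto
  then obtain D where D: "((deriv ^^ m) f has_field_derivative D) (at x)"
    using field_differentiable_def by blast
  have "((deriv ^^ m) g has_field_derivative D) (at x)"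
    by (rule has_field_derivative_transform_within_open[OF D assms(1) \<open>x\<in>S\<close>])
       (rule higher_deriv_local[OF assms(1,2)])
  then show "(deriv ^^ m) g field_differentiable at x"
    using field_differentiable_def by blast
qed

lemma Cn_const: "Cn n S (\<lambda>x. c)"
proof (induction n arbitrary: c)
  case 0 then show ?case by (simp add: Cn_0)
next
  case (Suc n) then show ?case by (simp add: Cn_Suc)
qed

lemma Cn_id: "Cn n S (\<lambda>x. x)"
  by (cases n) (auto simp: Cn_0 Cn_Suc Cn_const)

lemma Cn_add:
  assumes "open S" "Cn n S f" "Cn n S g"
  shows "Cn n S (\<lambda>x. f x + g x)"
  using assms(2,3)
proof (induction n arbitrary: f g)
  case 0 then show ?case by (auto simp: Cn_0 intro: field_differentiable_add)
next
  case (Suc n)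
  have d: "\<forall>x\<in>S. (\<lambda>x. f x + g x) field_differentiable at x"
    using Suc.prems by (auto simp: Cn_Suc intro: field_differentiable_add)
  have "Cn n S (\<lambda>x. deriv f x + deriv g x)"
    using Suc by (simp add: Cn_Suc)
  then have "Cn n S (deriv (\<lambda>x. f x + g x))"
    by (rule Cn_cong[OF assms(1), rotated]) (use Suc.prems in \<open>auto simp: Cn_Suc\<close>)
  then show ?case using d by (simp add: Cn_Suc)
qed

lemma Cn_mult:
  assumes "open S" "Cn n S f" "Cn n S g"
  shows "Cn n S (\<lambda>x. f x * g x)"
  using assms(2,3)
proof (induction n arbitrary: f g)
  case 0 then show ?case by (auto simp: Cn_0 intro: field_differentiable_mult)
next
  case (Suc n)
  have d: "\<forall>x\<in>S. (\<lambda>x. f x * g x) field_differentiable at x"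
    using Suc.prems by (auto simp: Cn_Suc intro: field_differentiable_mult)
  have "Cn n S (\<lambda>x. f x * deriv g x + deriv f x * g x)"
    using Suc.prems Suc.IH Cn_mono[of "Suc n" S f n] Cn_mono[of "Suc n" S g n]
    by (intro Cn_add[OF assms(1)]) (auto simp: Cn_Suc)
  then have "Cn n S (deriv (\<lambda>x. f x * g x))"
    by (rule Cn_cong[OF assms(1), rotated]) (use Suc.prems in \<open>auto simp: Cn_Suc\<close>)
  then show ?case using d by (simp add: Cn_Suc)
qed

lemma Cn_inverse:
  assumes "open S" "Cn n S g" "\<And>x. x \<in> S \<Longrightarrow> g x \<noteq> 0"
  shows "Cn n S (\<lambda>x. inverse (g x))"
  using assms(2)
proof (induction n)
  case 0
  have "(\<lambda>x. inverse (g x)) field_differentiable at x" if "x \<in> S" for x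
  proof -
    have "g field_differentiable at x" using 0 that by (simp add: Cn_0)
    from field_differentiable_inverse[OF this assms(3)[OF that]] show ?thesis .
  qed
  then show ?case by (simp add: Cn_0)
next
  case (Suc n)
  have d: "\<forall>x\<in>S. (\<lambda>x. inverse (g x)) field_differentiable at x"
  proof
    fix x assume x: "x \<in> S"
    have "g field_differentiable at x" using Suc.prems x by (simp add: Cn_Suc)
    from field_differentiable_inverse[OF this assms(3)[OF x]]
    show "(\<lambda>x. inverse (g x)) field_differentiable at x" .
  qed
  have g': "Cn n S (deriv g)" using Suc.prems by (simp add: Cn_Suc)
  have g0: "Cn n S g" using Suc.prems Cn_mono[of "Suc n" S g n] by simp
  have gi: "Cn n S (\<lambda>x. inverse (g x))" using Suc.IH[OF g0] .
  have "Cn n S (\<lambda>x. (-1) * deriv g x * (inverse (g x) * inverse (g x)))"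
    by (rule Cn_mult[OF assms(1) Cn_mult[OF assms(1) Cn_const g'] Cn_mult[OF assms(1) gi gi]])
  moreover have "(-1) * deriv g x * (inverse (g x) * inverse (g x)) = deriv (\<lambda>x. inverse (g x)) x"
    if "x \<in> S" for x
  proof -
    have "deriv (\<lambda>x. inverse (g x)) x = - deriv g x / g x ^ 2"
      by (rule deriv_inverse) (use Cn_diff[OF Suc.prems that] assms(3)[OF that] in auto)
    then show ?thesis by (simp add: power2_eq_square divide_inverse)
  qed
  ultimately have "Cn n S (deriv (\<lambda>x. inverse (g x)))"
    by (rule Cn_cong[OF assms(1), rotated])
  then show ?case using d by (simp add: Cn_Suc)
qed

lemma Cn_compose:
  assumes "open S" "Cn n UNIV f" "Cn n S g"
  shows "Cn n S (\<lambda>x. f (g x))"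
  using assms(2,3)
proof (induction n arbitrary: f g)
  case 0
  have "(\<lambda>x. f (g x)) field_differentiable at x" if "x \<in> S" for x
  proof -
    have "g field_differentiable at x" using 0 that by (simp add: Cn_0)
    moreover have "f field_differentiable at (g x)" using 0 by (simp add: Cn_0)
    ultimately have "f \<circ> g field_differentiable at x" by (rule field_differentiable_compose)
    then show ?thesis by (simp add: comp_def)
  qed
  then show ?case by (simp add: Cn_0)
next
  case (Suc n)
  have fd: "f field_differentiable at y" for y using Suc.prems(1) by (simp add: Cn_Suc)
  have gd: "g field_differentiable at x" if "x \<in> S" for x using Suc.prems(2) that by (simp add: Cn_Suc)
  have d: "\<forall>x\<in>S. (\<lambda>x. f (g x)) field_differentiable at x"
    using field_differentiable_compose[OF gd fd] by (simp add: comp_def)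
  have "Cn n S (\<lambda>x. deriv f (g x) * deriv g x)"
  proof (rule Cn_mult[OF assms(1)])
    show "Cn n S (\<lambda>x. deriv f (g x))"
      by (rule Suc.IH) (use Suc.prems Cn_mono[of "Suc n" S g n] in \<open>auto simp: Cn_Suc\<close>)
    show "Cn n S (deriv g)" using Suc.prems(2) by (simp add: Cn_Suc)
  qed
  moreover have "deriv f (g x) * deriv g x = deriv (\<lambda>x. f (g x)) x" if "x \<in> S" for x
    using deriv_chain[OF gd[OF that] fd] by (simp add: comp_def)
  ultimately have "Cn n S (deriv (\<lambda>x. f (g x)))"
    by (rule Cn_cong[OF assms(1), rotated])
  then show ?case using d by (simp add: Cn_Suc)
qed

lemma Cn_exp: "Cn n UNIV exp"
proof -
  have e: "deriv exp = exp" by (rule ext) (rule DERIV_imp_deriv, rule DERIV_exp)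
  have d: "exp field_differentiable at x" for x :: real
    using DERIV_exp field_differentiable_def by blast
  show ?thesis
    by (induction n) (auto simp: Cn_0 Cn_Suc e d)
qed

lemma Cn_antideriv:
  assumes "open S" "\<And>x. x \<in> S \<Longrightarrow> (F has_real_derivative f x) (at x)" "Cn n S f"
  shows "Cn (Suc n) S F"
proof -
  have "Cn n S (deriv F)"
    by (rule Cn_cong[OF assms(1) _ assms(3)]) (simp add: DERIV_imp_deriv[OF assms(2)])
  then show ?thesis using assms(2) by (auto simp: Cn_Suc field_differentiable_def)
qed

lemma smooth_antideriv:
  assumes "open S" "\<And>x. x \<in> S \<Longrightarrow> (F has_real_derivative f x) (at x)" "smooth_on S f"
  shows "smooth_on S F"
  unfolding smooth_Cn
proof
  fix n
  have "Cn (Suc n) S F" using Cn_antideriv[OF assms(1,2)] assms(3) unfolding smooth_Cn by blast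
  then show "Cn n S F" using Cn_mono by (meson le_SucI order_refl)
qed

lemma smooth_isCont: "smooth_on S f \<Longrightarrow> x \<in> S \<Longrightarrow> isCont f x"
proof -
  assume "smooth_on S f" "x \<in> S"
  then have "Cn 0 S f" by (simp add: smooth_Cn)
  then have "f field_differentiable at x" using \<open>x \<in> S\<close> by (rule Cn_diff)
  then show ?thesis by (rule field_differentiable_imp_continuous_at)
qed

lemma smooth_add: "open S \<Longrightarrow> smooth_on S f \<Longrightarrow> smooth_on S g \<Longrightarrow> smooth_on S (\<lambda>x. f x + g x)"
  unfolding smooth_Cn using Cn_add by blast
lemma smooth_mult: "open S \<Longrightarrow> smooth_on S f \<Longrightarrow> smooth_on S g \<Longrightarrow> smooth_on S (\<lambda>x. f x * g x)"
  unfolding smooth_Cn using Cn_mult by blast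
lemma smooth_const: "smooth_on S (\<lambda>x. c)"
  unfolding smooth_Cn using Cn_const by blast
lemma smooth_id: "smooth_on S (\<lambda>x. x)"
  unfolding smooth_Cn using Cn_id by blast
lemma smooth_inverse: "open S \<Longrightarrow> smooth_on S g \<Longrightarrow> (\<And>x. x \<in> S \<Longrightarrow> g x \<noteq> 0) \<Longrightarrow> smooth_on S (\<lambda>x. inverse (g x))"
  unfolding smooth_Cn using Cn_inverse by blast
lemma smooth_compose: "open S \<Longrightarrow> smooth_on UNIV f \<Longrightarrow> smooth_on S g \<Longrightarrow> smooth_on S (\<lambda>x. f (g x))"
  unfolding smooth_Cn using Cn_compose by blast
lemma smooth_exp: "smooth_on UNIV exp"
  unfolding smooth_Cn using Cn_exp by blast
lemma smooth_subset: "smooth_on S f \<Longrightarrow> T \<subseteq> S \<Longrightarrow> smooth_on T f"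
  unfolding smooth_Cn using Cn_subset by blast
lemma smooth_cong: "open S \<Longrightarrow> (\<And>x. x \<in> S \<Longrightarrow> f x = g x) \<Longrightarrow> smooth_on S f \<Longrightarrow> smooth_on S g"
  unfolding smooth_Cn using Cn_cong by blast

lemma smooth_cmult: "open S \<Longrightarrow> smooth_on S f \<Longrightarrow> smooth_on S (\<lambda>x. c * f x)"
  using smooth_mult[OF _ smooth_const] by blast
lemma smooth_minus: "open S \<Longrightarrow> smooth_on S f \<Longrightarrow> smooth_on S (\<lambda>x. - f x)"
  using smooth_cmult[of S f "-1"] by simp
lemma smooth_diff: "open S \<Longrightarrow> smooth_on S f \<Longrightarrow> smooth_on S g \<Longrightarrow> smooth_on S (\<lambda>x. f x - g x)"
  using smooth_add[OF _ _ smooth_minus, of S f g] by simp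
lemma smooth_divide: "open S \<Longrightarrow> smooth_on S f \<Longrightarrow> smooth_on S g \<Longrightarrow> (\<And>x. x \<in> S \<Longrightarrow> g x \<noteq> 0) \<Longrightarrow> smooth_on S (\<lambda>x. f x / g x)"
  using smooth_mult[OF _ _ smooth_inverse, of S f g] by (simp add: divide_inverse)

lemma antideriv_local:
  assumes "open T" "z0 \<in> T" "\<forall>x\<in>T. isCont f x"
  shows "\<exists>a b. a < z0 \<and> z0 < b \<and> {a..b} \<subseteq> T \<and>
           (\<exists>F. \<forall>x\<in>{a<..<b}. (F has_real_derivative f x) (at x))"
proof -
  obtain e where e: "e > 0" "ball z0 e \<subseteq> T" using assms(1,2) openE by blast
  define a where "a = z0 - e/2"
  define b where "b = z0 + e/2"
  have ab: "a < z0" "z0 < b" using e by (auto simp: a_def b_def)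
  have sub: "{a..b} \<subseteq> T"
  proof
    fix x assume "x \<in> {a..b}"
    then have "dist z0 x < e" using e by (auto simp: a_def b_def dist_real_def)
    then show "x \<in> T" using e by auto
  qed
  have cont: "continuous_on {a..b} f"
    using sub assms(3) by (meson continuous_at_imp_continuous_on subsetD)
  have "\<forall>x\<in>{a<..<b}. ((\<lambda>x. integral {a..x} f) has_real_derivative f x) (at x)"
  proof
    fix x assume x: "x \<in> {a<..<b}"
    then have "((\<lambda>x. integral {a..x} f) has_real_derivative f x) (at x within {a..b})"
      by (intro integral_has_real_derivative cont) auto
    then show "((\<lambda>x. integral {a..x} f) has_real_derivative f x) (at x)"
      using at_within_Icc_at[of a x b] x by simp
  qed
  then show ?thesis using ab sub by blast
qed

lemma ode_local:
  assumes T: "open T" "z0 \<in> T" and sp: "smooth_on T p" and sq: "smooth_on T q"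
  shows "\<exists>a b. a < z0 \<and> z0 < b \<and> {a<..<b} \<subseteq> T \<and>
     (\<exists>y. smooth_on {a<..<b} y \<and> (\<forall>x\<in>{a<..<b}. (y has_real_derivative p x * y x + q x) (at x)))"
proof -
  obtain a b P where ab: "a < z0" "z0 < b" "{a..b} \<subseteq> T"
    and P: "\<forall>x\<in>{a<..<b}. (P has_real_derivative p x) (at x)"
    using antideriv_local[OF T] smooth_isCont[OF sp] by blast
  define J where "J = {a<..<b}"
  have J: "open J" "z0 \<in> J" "J \<subseteq> T" using ab by (auto simp: J_def)
  have spJ: "smooth_on J p" using smooth_subset[OF sp J(3)] .
  have sP: "smooth_on J P" by (rule smooth_antideriv[OF J(1) _ spJ]) (use P J_def in auto)
  define m where "m = (\<lambda>x. exp (- P x) * q x)"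
  have sm: "smooth_on J m" unfolding m_def
    by (intro smooth_mult J(1) smooth_compose[OF J(1) smooth_exp] smooth_minus sP smooth_subset[OF sq J(3)])
  obtain a' b' R where ab': "a' < z0" "z0 < b'" "{a'..b'} \<subseteq> J"
    and R: "\<forall>x\<in>{a'<..<b'}. (R has_real_derivative m x) (at x)"
    using antideriv_local[OF J(1,2)] smooth_isCont[OF sm] by blast
  define J' where "J' = {a'<..<b'}"
  have J': "open J'" "J' \<subseteq> J" using ab' by (auto simp: J'_def)
  define y where "y = (\<lambda>x. R x * exp (P x))"
  have sy: "smooth_on J' y" unfolding y_def
  proof (intro smooth_mult J'(1) smooth_compose[OF J'(1) smooth_exp])
    show "smooth_on J' R" by (rule smooth_antideriv[OF J'(1) _ smooth_subset[OF sm J'(2)]]) (use R J'_def in auto)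
    show "smooth_on J' P" using smooth_subset[OF sP J'(2)] .
  qed
  have dy: "(y has_real_derivative p x * y x + q x) (at x)" if x: "x \<in> J'" for x
  proof -
    have xJ: "x \<in> {a<..<b}" using x J'(2) J_def by auto
    have "(y has_real_derivative m x * exp (P x) + R x * (exp (P x) * p x)) (at x)"
      unfolding y_def using R x P xJ unfolding J'_def
      by (auto intro!: derivative_eq_intros)
    moreover have "m x * exp (P x) + R x * (exp (P x) * p x) = p x * y x + q x"
      unfolding m_def y_def by (simp add: exp_minus field_simps)
    ultimately show ?thesis by simp
  qed
  show ?thesis
    using ab' J' J(3) sy dy unfolding J'_def by (intro exI[of _ a'] exI[of _ b']) auto
qed

lemma g13_shape1:
  "g13 1 0 0 1 0 0 W0 W1 = (\<lambda>p. (fst p, fst (snd p), snd (snd p) + W1 (fst p) * fst (snd p) + W0 (fst p)))"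
  by (auto simp: g13_def Let_def fun_eq_iff)

lemma pushes_shape1:
  assumes "\<forall>z\<in>I. (W1 has_real_derivative d1 z) (at z)" "\<forall>z\<in>I. (W0 has_real_derivative d0 z) (at z)"
    and "\<forall>z1\<in>I. \<forall>z2 w. Q' (z1, z2, w + W1 z1 * z2 + W0 z1) =
       (fst (Q (z1,z2,w)), fst (snd (Q (z1,z2,w))), snd (snd (Q (z1,z2,w))) + fst (Q (z1,z2,w)) * d1 z1 * z2
          + W1 z1 * fst (snd (Q (z1,z2,w))) + fst (Q (z1,z2,w)) * d0 z1)"
  shows "pushes (g13 1 0 0 1 0 0 W0 W1) (I \<times> UNIV) Q Q'"
  unfolding pushes_def
proof
  fix x assume "x \<in> I \<times> (UNIV :: (real \<times> real) set)"
  then obtain z1 z2 w where x: "x = (z1, z2, w)" "z1 \<in> I" by auto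
  have a1: "(W1 has_derivative (\<lambda>h. d1 z1 * h)) (at (fst (z1,z2,w)))"
    using assms(1) x by (simp add: has_field_derivative_def)
  have a0: "(W0 has_derivative (\<lambda>h. d0 z1 * h)) (at (fst (z1,z2,w)))"
    using assms(2) x by (simp add: has_field_derivative_def)
  define D where "D = (\<lambda>u::pt. (fst u, fst (snd u), snd (snd u) + fst u * d1 z1 * z2 + W1 z1 * fst (snd u) + fst u * d0 z1))"
  have "(g13 1 0 0 1 0 0 W0 W1 has_derivative D) (at x)"
    unfolding g13_shape1 x
    apply (rule derivative_eq_intros has_derivative_compose[of fst, OF _ a1] has_derivative_compose[of fst, OF _ a0] | simp)+
    apply (auto simp: D_def fun_eq_iff algebra_simps)
    done
  moreover have "D (Q x) = Q' (g13 1 0 0 1 0 0 W0 W1 x)"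
    using assms(3) x by (simp add: D_def g13_shape1)
  ultimately show "\<exists>D. (g13 1 0 0 1 0 0 W0 W1 has_derivative D) (at x) \<and> D (Q x) = Q' (g13 1 0 0 1 0 0 W0 W1 x)"
    by blast
qed

lemma g13_shape3:
  "g13 0 (-1) h a2 0 0 (\<lambda>_. 0) W1 = (\<lambda>p. (-1 / (h * fst p + a2), fst (snd p) / (h * fst p + a2),
     snd (snd p) / (h * (h * fst p + a2)) - h / (h * (h * fst p + a2)^2) * (fst (snd p)^3 / 6)
      + W1 (fst p) * fst (snd p)))"
  by (auto simp: g13_def Let_def fun_eq_iff)

lemma pushes_shape3:
  assumes h: "h \<noteq> 0" and dI: "\<forall>z\<in>I. h * z + a2 \<noteq> 0"
    and W: "\<forall>z\<in>I. (W1 has_real_derivative d1 z) (at z)"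
    and Q: "\<forall>z1\<in>I. \<forall>z2 w. fst (Q (z1,z2,w)) = 0 \<and>
       Q' (g13 0 (-1) h a2 0 0 (\<lambda>_. 0) W1 (z1,z2,w)) =
       (0, fst (snd (Q (z1,z2,w))) / (h * z1 + a2),
        snd (snd (Q (z1,z2,w))) / (h * (h * z1 + a2))
          - fst (snd (Q (z1,z2,w))) * z2^2 / (2 * (h * z1 + a2)^2) + W1 z1 * fst (snd (Q (z1,z2,w))))"
  shows "pushes (g13 0 (-1) h a2 0 0 (\<lambda>_. 0) W1) (I \<times> UNIV) Q Q'"
  unfolding pushes_def
proof
  fix x assume "x \<in> I \<times> (UNIV :: (real \<times> real) set)"
  then obtain z1 z2 w where x: "x = (z1, z2, w)" "z1 \<in> I" by auto
  define d where "d = h * z1 + a2"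
  have d0: "d \<noteq> 0" using dI x by (simp add: d_def)
  have a1: "(W1 has_derivative (\<lambda>t. d1 z1 * t)) (at (fst (z1,z2,w)))"
    using W x by (simp add: has_field_derivative_def)
  define D where "D = (\<lambda>u::pt. (h * fst u / d^2, - z2 * h * fst u / d^2 + fst (snd u) / d,
      fst u * (- w / d^2 + z2^3 * h / (3 * d^3) + d1 z1 * z2)
      + fst (snd u) * (W1 z1 - z2^2 / (2 * d^2)) + snd (snd u) / (h * d)))"
  have "(g13 0 (-1) h a2 0 0 (\<lambda>_. 0) W1 has_derivative D) (at x)"
    unfolding g13_shape3 x
    apply (rule derivative_eq_intros has_derivative_compose[of fst, OF _ a1] | simp add: d0[unfolded d_def] h)+
    apply (simp add: D_def fun_eq_iff d_def[symmetric])
    apply (auto simp: field_simps d0 h power2_eq_square power3_eq_cube)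
    done
  moreover have "D (Q x) = Q' (g13 0 (-1) h a2 0 0 (\<lambda>_. 0) W1 x)"
    using Q x d0 h by (auto simp: D_def d_def field_simps power2_eq_square)
  ultimately show "\<exists>D. (g13 0 (-1) h a2 0 0 (\<lambda>_. 0) W1 has_derivative D) (at x) \<and> D (Q x) = Q' (g13 0 (-1) h a2 0 0 (\<lambda>_. 0) W1 x)"
    by blast
qed

lemma ucomb_eval: "u_comb a1 b1 k b2 a2 h (z1,z2,w) = (a1 + b1*z1 + k*z1^2, k*z1*z2 + b2*z2 + a2 + h*z1,
   - b1*w + k*(z1*w + z2^3/6) + 3*b2*w + h*(z2^2/2))"
  by (simp add: u_comb_def vP1_def vD1_def vK_def vD2_def vP2_def vH_def algebra_simps)

lemma comb_eval: "u_comb a1 b1 k b2 a2 h (z1,z2,w) + vR \<alpha> (z1,z2,w) + vZ \<sigma> (z1,z2,w) =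
  (a1 + b1*z1 + k*z1^2, k*z1*z2 + b2*z2 + a2 + h*z1,
   - b1*w + k*(z1*w + z2^3/6) + 3*b2*w + h*(z2^2/2) + \<alpha> z1 * z2 + \<sigma> z1)"
  by (simp add: ucomb_eval vR_def vZ_def)

lemma P2R_eval: "\<beta> *\<^sub>R vP2 (z1,z2,w) + vR \<alpha> (z1,z2,w) = (0, \<beta>, \<alpha> z1 * z2)"
  by (simp add: vP2_def vR_def)

lemma smooth_deriv: "smooth_on S f \<Longrightarrow> z \<in> S \<Longrightarrow> (f has_real_derivative deriv f z) (at z)"
  unfolding smooth_Cn using Cn_diff DERIV_deriv_iff_field_differentiable by blast

definition GOAL :: "vfield \<Rightarrow> bool" where
  "GOAL Q \<longleftrightarrow> (\<exists>I c1 c2 c3 c4 c5 c6 W0 W1.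
     open I \<and> is_interval I \<and> I \<noteq> {} \<and>
     c1 * c4 - c2 * c3 \<noteq> 0 \<and> (\<forall>z\<in>I. c3 * z + c4 \<noteq> 0) \<and>
     smooth_on I W0 \<and> smooth_on I W1 \<and>
     ((\<exists>a1 b1 k b2 a2 h.
         pushes (g13 c1 c2 c3 c4 c5 c6 W0 W1) (I \<times> UNIV) Q (u_comb a1 b1 k b2 a2 h))
      \<or> (\<exists>\<beta> \<alpha>. smooth_on ((\<lambda>z. (c1 * z + c2) / (c3 * z + c4)) ` I) \<alpha> \<and>
         pushes (g13 c1 c2 c3 c4 c5 c6 W0 W1) (I \<times> UNIV) Q
           (\<lambda>x. \<beta> *\<^sub>R vP2 x + vR \<alpha> x))))"

lemma caseA:
  assumes Q: "Q = (\<lambda>x. u_comb a1 b1 k b2 a2 h x + vR \<alpha> x + vZ \<sigma> x)"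
    and sa: "smooth_on UNIV \<alpha>" and ss: "smooth_on UNIV \<sigma>"
    and z0: "a1 + b1 * z0 + k * (z0 * z0) \<noteq> 0"
  shows "GOAL Q"
proof -
  define \<tau> where "\<tau> = (\<lambda>z. a1 + b1 * z + k * (z * z))"
  define T where "T = {z. \<tau> z \<noteq> 0}"
  have oT: "open T" unfolding T_def \<tau>_def
    by (rule open_Collect_neq) (intro continuous_intros)+
  have z0T: "z0 \<in> T" using z0 by (simp add: T_def \<tau>_def)
  have st: "smooth_on S \<tau>" if "open S" for S
    unfolding \<tau>_def by (intro smooth_add smooth_mult smooth_const smooth_id that)
  define p1 where "p1 = (\<lambda>z. (2*b2 - b1) / \<tau> z)"
  define q1 where "q1 = (\<lambda>z. - \<alpha> z / \<tau> z)"
  have sp1: "smooth_on T p1" unfolding p1_def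
    by (rule smooth_divide[OF oT smooth_const st[OF oT]]) (simp add: T_def)
  have sq1: "smooth_on T q1" unfolding q1_def
    by (rule smooth_divide[OF oT smooth_minus[OF oT smooth_subset[OF sa]] st[OF oT]]) (auto simp: T_def)
  obtain a b W1 where ab: "a < z0" "z0 < b" "{a<..<b} \<subseteq> T"
    and sW1: "smooth_on {a<..<b} W1"
    and dW1: "\<forall>x\<in>{a<..<b}. (W1 has_real_derivative p1 x * W1 x + q1 x) (at x)"
    using ode_local[OF oT z0T sp1 sq1] by blast
  define J where "J = {a<..<b}"
  have oJ: "open J" and z0J: "z0 \<in> J" and JT: "J \<subseteq> T" using ab by (auto simp: J_def)
  have tJ: "\<tau> z \<noteq> 0" if "z \<in> J" for z using JT that by (auto simp: T_def)
  define p0 where "p0 = (\<lambda>z. (3*b2 - b1 + k*z) / \<tau> z)"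
  define q0 where "q0 = (\<lambda>z. (- ((a2 + h*z) * W1 z) - \<sigma> z) / \<tau> z)"
  have sp0: "smooth_on J p0" unfolding p0_def
    by (rule smooth_divide[OF oJ _ st[OF oJ] tJ]) (intro smooth_add smooth_mult smooth_const smooth_id oJ)
  have sq0: "smooth_on J q0" unfolding q0_def
    by (rule smooth_divide[OF oJ _ st[OF oJ] tJ])
       (intro smooth_diff smooth_minus smooth_add smooth_mult smooth_const smooth_id oJ
          smooth_subset[OF ss] sW1[folded J_def] subset_UNIV)
  obtain a' b' W0 where ab': "a' < z0" "z0 < b'" "{a'<..<b'} \<subseteq> J"
    and sW0: "smooth_on {a'<..<b'} W0"
    and dW0: "\<forall>x\<in>{a'<..<b'}. (W0 has_real_derivative p0 x * W0 x + q0 x) (at x)"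
    using ode_local[OF oJ z0J sp0 sq0] by blast
  define I where "I = {a'<..<b'}"
  have IJ: "I \<subseteq> J" using ab' by (simp add: I_def)
  have push: "pushes (g13 1 0 0 1 0 0 W0 W1) (I \<times> UNIV) Q (u_comb a1 b1 k b2 a2 h)"
  proof (rule pushes_shape1)
    show "\<forall>z\<in>I. (W1 has_real_derivative p1 z * W1 z + q1 z) (at z)"
      using dW1 IJ by (auto simp: J_def)
    show "\<forall>z\<in>I. (W0 has_real_derivative p0 z * W0 z + q0 z) (at z)"
      using dW0 by (auto simp: I_def)
    show "\<forall>z1\<in>I. \<forall>z2 w. u_comb a1 b1 k b2 a2 h (z1, z2, w + W1 z1 * z2 + W0 z1) =
       (fst (Q (z1,z2,w)), fst (snd (Q (z1,z2,w))), snd (snd (Q (z1,z2,w))) + fst (Q (z1,z2,w)) * (p1 z1 * W1 z1 + q1 z1) * z2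
          + W1 z1 * fst (snd (Q (z1,z2,w))) + fst (Q (z1,z2,w)) * (p0 z1 * W0 z1 + q0 z1))"
    proof (intro ballI allI)
      fix z1 z2 w assume "z1 \<in> I"
      then have t: "\<tau> z1 \<noteq> 0" using IJ tJ by auto
      then have t': "a1 + b1 * z1 + k * z1^2 \<noteq> 0" by (simp add: \<tau>_def power2_eq_square)
      show "u_comb a1 b1 k b2 a2 h (z1, z2, w + W1 z1 * z2 + W0 z1) =
       (fst (Q (z1,z2,w)), fst (snd (Q (z1,z2,w))), snd (snd (Q (z1,z2,w))) + fst (Q (z1,z2,w)) * (p1 z1 * W1 z1 + q1 z1) * z2
          + W1 z1 * fst (snd (Q (z1,z2,w))) + fst (Q (z1,z2,w)) * (p0 z1 * W0 z1 + q0 z1))"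
      proof -
        have tt: "a1 + b1*z1 + k*z1^2 = \<tau> z1" by (simp add: \<tau>_def power2_eq_square)
        have e1: "(a1 + b1*z1 + k*z1^2) * (p1 z1 * W1 z1 + q1 z1) = (2*b2 - b1) * W1 z1 - \<alpha> z1"
          unfolding tt using t by (simp add: p1_def q1_def field_simps)
        have e0: "(a1 + b1*z1 + k*z1^2) * (p0 z1 * W0 z1 + q0 z1) = (3*b2 - b1 + k*z1) * W0 z1 - (a2 + h*z1) * W1 z1 - \<sigma> z1"
          unfolding tt using t by (simp add: p0_def q0_def field_simps)
        show ?thesis
          unfolding Q comb_eval fst_conv snd_conv e1 e0
          unfolding ucomb_eval by (simp add: algebra_simps power2_eq_square power3_eq_cube)
      qed
    qed
  qed
  show ?thesis unfolding GOAL_def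
    apply (rule exI[of _ I], rule exI[of _ 1], rule exI[of _ 0], rule exI[of _ 0], rule exI[of _ 1])
    apply (rule exI[of _ 0], rule exI[of _ 0], rule exI[of _ W0], rule exI[of _ W1])
    using push ab' sW0 smooth_subset[OF sW1 IJ[unfolded J_def]] by (auto simp: I_def is_interval_oo)
qed

lemma caseB1:
  assumes Q: "Q = (\<lambda>x. u_comb 0 0 0 b2 a2 h x + vR \<alpha> x + vZ \<sigma> x)"
    and sa: "smooth_on UNIV \<alpha>" and ss: "smooth_on UNIV \<sigma>" and b2: "b2 \<noteq> 0"
  shows "GOAL Q"
proof -
  define W1 where "W1 = (\<lambda>z. \<alpha> z / (2*b2))"
  define W0 where "W0 = (\<lambda>z. (\<sigma> z + (a2 + h*z) * W1 z) / (3*b2))"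
  have sW1: "smooth_on UNIV W1" unfolding W1_def
    by (rule smooth_divide[OF open_UNIV sa smooth_const]) (use b2 in simp)
  have sW0: "smooth_on UNIV W0" unfolding W0_def
    by (rule smooth_divide[OF open_UNIV _ smooth_const]) 
       (use b2 in \<open>simp_all add: smooth_add smooth_mult smooth_const smooth_id ss sW1\<close>)
  have push: "pushes (g13 1 0 0 1 0 0 W0 W1) (UNIV \<times> UNIV) Q (u_comb 0 0 0 b2 a2 h)"
  proof (rule pushes_shape1)
    show "\<forall>z\<in>UNIV. (W1 has_real_derivative deriv W1 z) (at z)" using smooth_deriv[OF sW1] by blast
    show "\<forall>z\<in>UNIV. (W0 has_real_derivative deriv W0 z) (at z)" using smooth_deriv[OF sW0] by blast
    show "\<forall>z1\<in>UNIV. \<forall>z2 w. u_comb 0 0 0 b2 a2 h (z1, z2, w + W1 z1 * z2 + W0 z1) =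
       (fst (Q (z1,z2,w)), fst (snd (Q (z1,z2,w))), snd (snd (Q (z1,z2,w))) + fst (Q (z1,z2,w)) * deriv W1 z1 * z2
          + W1 z1 * fst (snd (Q (z1,z2,w))) + fst (Q (z1,z2,w)) * deriv W0 z1)"
    proof (intro ballI allI)
      fix z1 z2 w
      show "u_comb 0 0 0 b2 a2 h (z1, z2, w + W1 z1 * z2 + W0 z1) =
       (fst (Q (z1,z2,w)), fst (snd (Q (z1,z2,w))), snd (snd (Q (z1,z2,w))) + fst (Q (z1,z2,w)) * deriv W1 z1 * z2
          + W1 z1 * fst (snd (Q (z1,z2,w))) + fst (Q (z1,z2,w)) * deriv W0 z1)"
        unfolding Q comb_eval fst_conv snd_conv
        unfolding ucomb_eval W0_def W1_def using b2 by (simp add: field_simps)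
    qed
  qed
  show ?thesis unfolding GOAL_def
    apply (rule exI[of _ UNIV], rule exI[of _ 1], rule exI[of _ 0], rule exI[of _ 0], rule exI[of _ 1])
    apply (rule exI[of _ 0], rule exI[of _ 0], rule exI[of _ W0], rule exI[of _ W1])
    using push sW0 sW1 by auto
qed

lemma caseB3:
  assumes Q: "Q = (\<lambda>x. u_comb 0 0 0 0 a2 0 x + vR \<alpha> x + vZ \<sigma> x)"
    and sa: "smooth_on UNIV \<alpha>" and ss: "smooth_on UNIV \<sigma>" and a2: "a2 \<noteq> 0"
  shows "GOAL Q"
proof -
  define W1 where "W1 = (\<lambda>z. - \<sigma> z / a2)"
  define W0 where "W0 = (\<lambda>z::real. 0::real)"
  have sW1: "smooth_on UNIV W1" unfolding W1_def
    by (rule smooth_divide[OF open_UNIV smooth_minus[OF open_UNIV ss] smooth_const]) (use a2 in simp)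
  have sW0: "smooth_on UNIV W0" unfolding W0_def by (rule smooth_const)
  have push: "pushes (g13 1 0 0 1 0 0 W0 W1) (UNIV \<times> UNIV) Q (\<lambda>x. a2 *\<^sub>R vP2 x + vR \<alpha> x)"
  proof (rule pushes_shape1)
    show "\<forall>z\<in>UNIV. (W1 has_real_derivative deriv W1 z) (at z)" using smooth_deriv[OF sW1] by blast
    show "\<forall>z\<in>UNIV. (W0 has_real_derivative deriv W0 z) (at z)" using smooth_deriv[OF sW0] by blast
    show "\<forall>z1\<in>UNIV. \<forall>z2 w. a2 *\<^sub>R vP2 (z1, z2, w + W1 z1 * z2 + W0 z1) + vR \<alpha> (z1, z2, w + W1 z1 * z2 + W0 z1) =
       (fst (Q (z1,z2,w)), fst (snd (Q (z1,z2,w))), snd (snd (Q (z1,z2,w))) + fst (Q (z1,z2,w)) * deriv W1 z1 * z2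
          + W1 z1 * fst (snd (Q (z1,z2,w))) + fst (Q (z1,z2,w)) * deriv W0 z1)"
    proof (intro ballI allI)
      fix z1 z2 w
      show "a2 *\<^sub>R vP2 (z1, z2, w + W1 z1 * z2 + W0 z1) + vR \<alpha> (z1, z2, w + W1 z1 * z2 + W0 z1) =
       (fst (Q (z1,z2,w)), fst (snd (Q (z1,z2,w))), snd (snd (Q (z1,z2,w))) + fst (Q (z1,z2,w)) * deriv W1 z1 * z2
          + W1 z1 * fst (snd (Q (z1,z2,w))) + fst (Q (z1,z2,w)) * deriv W0 z1)"
        unfolding Q comb_eval fst_conv snd_conv P2R_eval
        unfolding W0_def W1_def using a2 by (simp add: field_simps)
    qed
  qed
  show ?thesis unfolding GOAL_def
    apply (rule exI[of _ UNIV], rule exI[of _ 1], rule exI[of _ 0], rule exI[of _ 0], rule exI[of _ 1])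
    apply (rule exI[of _ 0], rule exI[of _ 0], rule exI[of _ W0], rule exI[of _ W1])
    using push sW0 sW1 smooth_subset[OF sa] by auto
qed

lemma caseB2:
  assumes Q: "Q = (\<lambda>x. u_comb 0 0 0 0 a2 h x + vR \<alpha> x + vZ \<sigma> x)"
    and sa: "smooth_on UNIV \<alpha>" and ss: "smooth_on UNIV \<sigma>" and h: "h \<noteq> 0"
  shows "GOAL Q"
proof -
  define z0 where "z0 = (1 - a2) / h"
  define r where "r = 1 / (2 * \<bar>h\<bar>)"
  define I where "I = {z0 - r<..<z0 + r}"
  have r: "r > 0" using h by (simp add: r_def)
  have oI: "open I" and iI: "is_interval I" and neI: "I \<noteq> {}"
    using r by (auto simp: I_def is_interval_oo intro!: exI[of _ z0])
  have dpos: "h * z + a2 > 0" if "z \<in> I" for z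
  proof -
    have "\<bar>z - z0\<bar> < r" using that by (auto simp: I_def)
    then have "\<bar>h\<bar> * \<bar>z - z0\<bar> \<le> \<bar>h\<bar> * r" by (intro mult_left_mono) auto
    also have "\<bar>h\<bar> * r = 1/2" using h by (simp add: r_def)
    finally have "\<bar>h * (z - z0)\<bar> \<le> 1/2" by (simp add: abs_mult)
    moreover have "h * z + a2 = 1 + h * (z - z0)" using h by (simp add: z0_def field_simps)
    ultimately show ?thesis by linarith
  qed
  have dI: "\<forall>z\<in>I. h * z + a2 \<noteq> 0" using dpos by (metis less_irrefl)
  define W1 where "W1 = (\<lambda>z. - \<sigma> z / (h * ((h*z + a2) * (h*z + a2))))"
  have sW1: "smooth_on I W1" unfolding W1_def
    by (rule smooth_divide[OF oI smooth_minus[OF oI smooth_subset[OF ss]]])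
       (use h dI in \<open>auto intro!: smooth_mult smooth_add smooth_const smooth_id oI\<close>)
  define al where "al = (\<lambda>t. \<alpha> ((- inverse t - a2) / h) / h)"
  have sal0: "smooth_on {..<0} al" unfolding al_def
    by (rule smooth_divide[OF open_lessThan smooth_compose[OF open_lessThan sa] smooth_const])
       (use h in \<open>auto intro!: smooth_divide smooth_diff smooth_minus smooth_inverse smooth_id smooth_const\<close>)
  have img: "(\<lambda>z. (0 * z + - 1) / (h * z + a2)) ` I \<subseteq> {..<0}"
    using dpos by auto
  have sal: "smooth_on ((\<lambda>z. (0 * z + - 1) / (h * z + a2)) ` I) al"
    by (rule smooth_subset[OF sal0 img])
  have push: "pushes (g13 0 (-1) h a2 0 0 (\<lambda>_. 0) W1) (I \<times> UNIV) Q (\<lambda>x. 1 *\<^sub>R vP2 x + vR al x)"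
  proof (rule pushes_shape3[OF h dI])
    show "\<forall>z\<in>I. (W1 has_real_derivative deriv W1 z) (at z)" using smooth_deriv[OF sW1] by blast
    show "\<forall>z1\<in>I. \<forall>z2 w. fst (Q (z1,z2,w)) = 0 \<and>
       1 *\<^sub>R vP2 (g13 0 (-1) h a2 0 0 (\<lambda>_. 0) W1 (z1,z2,w)) + vR al (g13 0 (-1) h a2 0 0 (\<lambda>_. 0) W1 (z1,z2,w)) =
       (0, fst (snd (Q (z1,z2,w))) / (h * z1 + a2),
        snd (snd (Q (z1,z2,w))) / (h * (h * z1 + a2))
          - fst (snd (Q (z1,z2,w))) * z2^2 / (2 * (h * z1 + a2)^2) + W1 z1 * fst (snd (Q (z1,z2,w))))"
    proof (intro ballI allI)
      fix z1 z2 w assume z1: "z1 \<in> I"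
      define d where "d = h * z1 + a2"
      have d: "d \<noteq> 0" using dI z1 by (simp add: d_def)
      have arg: "(- inverse (- 1 / d) - a2) / h = z1" using h d by (simp add: d_def field_simps)
      have W1d: "W1 z1 = - \<sigma> z1 / (h * (d * d))" by (simp add: W1_def d_def)
      show "fst (Q (z1,z2,w)) = 0 \<and>
       1 *\<^sub>R vP2 (g13 0 (-1) h a2 0 0 (\<lambda>_. 0) W1 (z1,z2,w)) + vR al (g13 0 (-1) h a2 0 0 (\<lambda>_. 0) W1 (z1,z2,w)) =
       (0, fst (snd (Q (z1,z2,w))) / (h * z1 + a2),
        snd (snd (Q (z1,z2,w))) / (h * (h * z1 + a2))
          - fst (snd (Q (z1,z2,w))) * z2^2 / (2 * (h * z1 + a2)^2) + W1 z1 * fst (snd (Q (z1,z2,w))))"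
      proof -
        have a2d: "a2 = d - h * z1" by (simp add: d_def)
        show ?thesis
          unfolding Q comb_eval fst_conv snd_conv g13_shape3 P2R_eval d_def[symmetric]
          unfolding al_def arg W1d using h d
          by (simp add: d_def[symmetric] field_simps power2_eq_square, simp add: a2d algebra_simps)
      qed
    qed
  qed
  show ?thesis unfolding GOAL_def
    apply (rule exI[of _ I], rule exI[of _ 0], rule exI[of _ "-1"], rule exI[of _ h], rule exI[of _ a2])
    apply (rule exI[of _ 0], rule exI[of _ 0], rule exI[of _ "\<lambda>_. 0"], rule exI[of _ W1])
    apply (intro conjI oI iI neI smooth_const sW1 disjI2 exI[of _ 1] exI[of _ al])
    using h dI sal push by auto
qed

theorem lemma13:
  fixes Q :: vfield
  assumes "in_a13 Q" and "appropriate Q"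
  shows "\<exists>I c1 c2 c3 c4 c5 c6 W0 W1.
     open I \<and> is_interval I \<and> I \<noteq> {} \<and>
     c1 * c4 - c2 * c3 \<noteq> 0 \<and> (\<forall>z\<in>I. c3 * z + c4 \<noteq> 0) \<and>
     smooth_on I W0 \<and> smooth_on I W1 \<and>
     ((\<exists>a1 b1 k b2 a2 h.
         pushes (g13 c1 c2 c3 c4 c5 c6 W0 W1) (I \<times> UNIV) Q (u_comb a1 b1 k b2 a2 h))
      \<or> (\<exists>\<beta> \<alpha>. smooth_on ((\<lambda>z. (c1 * z + c2) / (c3 * z + c4)) ` I) \<alpha> \<and>
         pushes (g13 c1 c2 c3 c4 c5 c6 W0 W1) (I \<times> UNIV) Q
           (\<lambda>x. \<beta> *\<^sub>R vP2 x + vR \<alpha> x)))"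
proof -
  obtain a1 b1 k b2 a2 h \<alpha> \<sigma> where sa: "smooth_on UNIV \<alpha>" and ss: "smooth_on UNIV \<sigma>"
    and Q: "Q = (\<lambda>x. u_comb a1 b1 k b2 a2 h x + vR \<alpha> x + vZ \<sigma> x)"
    using assms(1) unfolding in_a13_def by blast
  have "GOAL Q"
  proof (cases "\<exists>z0. a1 + b1 * z0 + k * (z0 * z0) \<noteq> 0")
    case True
    then obtain z0 where "a1 + b1 * z0 + k * (z0 * z0) \<noteq> 0" by blast
    then show ?thesis by (rule caseA[OF Q sa ss])
  next
    case False
    then have all: "\<forall>z0. a1 + b1 * z0 + k * (z0 * z0) = 0" by simp
    have e0: "a1 = 0" using all[rule_format, of 0] by simp
    have e1: "a1 + b1 + k = 0" using all[rule_format, of 1] by simp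
    have e2: "a1 - b1 + k = 0" using all[rule_format, of "-1"] by simp
    from e0 e1 e2 have z: "a1 = 0" "b1 = 0" "k = 0" by linarith+
    have Q0: "Q = (\<lambda>x. u_comb 0 0 0 b2 a2 h x + vR \<alpha> x + vZ \<sigma> x)" using Q z by simp
    obtain x where "fst (Q x) \<noteq> 0 \<or> fst (snd (Q x)) \<noteq> 0"
      using assms(2) unfolding appropriate_def by blast
    moreover obtain z1 z2 w where xe: "x = (z1, z2, w)" by (cases x) auto
    moreover have "Q x = (0, b2 * z2 + a2 + h * z1, - 0*w + 0*(z1*w + z2^3/6) + 3*b2*w + h*(z2^2/2) + \<alpha> z1 * z2 + \<sigma> z1)"
      unfolding Q0 xe comb_eval by simp
    ultimately have nz: "b2 * z2 + a2 + h * z1 \<noteq> 0" by auto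
    show ?thesis
    proof (cases "b2 = 0")
      case False
      then show ?thesis by (rule caseB1[OF Q0 sa ss])
    next
      case b2: True
      show ?thesis
      proof (cases "h = 0")
        case False
        then show ?thesis using caseB2[OF _ sa ss] Q0 b2 by blast
      next
        case True
        then have "a2 \<noteq> 0" using nz b2 by simp
        then show ?thesis using caseB3[OF _ sa ss] Q0 b2 True by blast
      qed
    qed
  qed
  then show ?thesis unfolding GOAL_def .
qed


end
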